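(* In the Simon urn described in the context, with fixed trigger probability $p\in(0,1)$, for all $n\ge1$, $$\mathbb E[K_{n,1}]=\frac{\Gamma(n+1-p)}{\Gamma(2-p)\,\Gamma(n)},$$ and, as $n\to\infty$, $$\mathbb E[K_{n,1}]=\frac{n^{1-p}}{\Gamma(2-p)}+O\!\left(\frac{1}{n^{p}}\right).$$
   Context: Simon urn. The urn is empty at time $0$. Let $B_0=1$ and let $(B_n)_{n\ge1}$ be i.i.d. Bernoulli random variables with $\Pr(B_n=1)=p\in(0,1)$, independent of everything else. Colors are labelled $1,2,\dots$ in order of first appearance. At each time $n\ge1$: if $B_{n-1}=1$, one ball of a new color is added and registered; if $B_{n-1}=0$, a ball is drawn uniformly at random from the urn, its color is registered, and one additional ball of that color is added. $K_{n,c}$ denotes the number of times color $c$ has been registered up to and including time $n$ (equal to the number of balls of color $c$ at time $n$). $\Gamma$ is the gamma function. *)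

theory Defs
  imports "HOL-Probability.Probability" "HOL-Library.Landau_Symbols"
begin

text \<open>The state at time n is the list of colours of the balls in
the urn in order of insertion (so it has length n).  Colours are labelled
1, 2, ... in order of first appearance, so a new colour is card (set u) + 1.
At time Suc n the trigger B_n is used: B_0 = 1 deterministically, and for
n \<ge> 1, B_n is Bernoulli(p), independent of the past.\<close>

fun simon_urn :: "real \<Rightarrow> nat \<Rightarrow> nat list pmf" where
  "simon_urn p 0 = return_pmf []"
| "simon_urn p (Suc n) =
     do { u \<leftarrow> simon_urn p n;
          b \<leftarrow> (if n = 0 then return_pmf True else bernoulli_pmf p);
          if b then return_pmf (u @ [Suc (card (set u))])
          else map_pmf (\<lambda>i. u @ [u ! i]) (pmf_of_set {..<length u}) }"

definition K :: "nat list \<Rightarrow> nat \<Rightarrow> nat" where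
  "K u c = count (mset u) c"

end

theory Submission
  imports Defs
begin

lemma simon_support:
  "u \<in> set_pmf (simon_urn p n) \<Longrightarrow> length u = n"
proof (induction n arbitrary: u)
  case 0 then show ?case by simp
next
  case (Suc n)
  then show ?case
    by (auto simp: set_bind_pmf split: if_splits)
qed

lemma simon_finite: "finite (set_pmf (simon_urn p n))"
proof (induction n)
  case 0 then show ?case by simp
next
  case (Suc n)
  have "finite (set_pmf (if b then return_pmf (u @ [Suc (card (set u))])
          else map_pmf (\<lambda>i. u @ [u ! i]) (pmf_of_set {..<length u})))"
    if "u \<in> set_pmf (simon_urn p n)" "b \<in> set_pmf (if n = 0 then return_pmf True else bernoulli_pmf p)" for u b
  proof (cases "n = 0")
    case True then show ?thesis using that by auto
  next
    case False
    then have "{..<length u} \<noteq> {}" using simon_support[OF that(1)] by auto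
    then show ?thesis by (auto simp: set_pmf_of_set)
  qed
  moreover have "finite (set_pmf (if n = 0 then return_pmf True else bernoulli_pmf p))"
    by simp
  ultimately show ?case using Suc
    by (auto simp: set_bind_pmf intro!: finite_UN_I)
qed

lemma sum_count: "(\<Sum>i<length u. (if u ! i = c then 1 else 0 :: real)) = real (count (mset u) c)"
proof (induction u rule: rev_induct)
  case Nil then show ?case by simp
next
  case (snoc x xs)
  have "(\<Sum>i<length (xs @ [x]). (if (xs @ [x]) ! i = c then 1 else 0 :: real))
      = (\<Sum>i<length xs. (if xs ! i = c then 1 else 0 :: real)) + (if x = c then 1 else 0)"
    by (simp add: nth_append)
  then show ?case using snoc by simp
qed

lemma inner_exp:
  assumes "length u = n" "n \<ge> 1" "0 \<le> p" "p \<le> 1"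
  shows "measure_pmf.expectation
     (bernoulli_pmf p \<bind> (\<lambda>b. if b then return_pmf (u @ [Suc (card (set u))])
          else map_pmf (\<lambda>i. u @ [u ! i]) (pmf_of_set {..<length u}))) (\<lambda>u. real (K u 1))
    = real (K u 1) * (1 + (1 - p) / n)"
proof -
  have ne: "{..<length u} \<noteq> {}" using assms by (simp add: lessThan_empty_iff)
  have c: "Suc (card (set u)) \<noteq> 1" using assms by (cases u) auto
  let ?g = "(\<lambda>b. if b then return_pmf (u @ [Suc (card (set u))])
          else map_pmf (\<lambda>i. u @ [u ! i]) (pmf_of_set {..<length u}))"
  have "measure_pmf.expectation (bernoulli_pmf p \<bind> ?g) (\<lambda>u. real (K u 1))
     = (\<Sum>b\<in>UNIV. pmf (bernoulli_pmf p) b *\<^sub>R measure_pmf.expectation (?g b) (\<lambda>u. real (K u 1)))"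
    by (rule pmf_expectation_bind) (use ne in \<open>auto simp: set_pmf_of_set\<close>)
  also have "\<dots> = p * real (K u 1) + (1 - p) * measure_pmf.expectation (pmf_of_set {..<length u}) (\<lambda>i. real (K (u @ [u ! i]) 1))"
    using assms c by (simp add: UNIV_bool K_def)
  also have "measure_pmf.expectation (pmf_of_set {..<length u}) (\<lambda>i. real (K (u @ [u ! i]) 1))
       = (\<Sum>i<length u. real (K u 1) + (if u ! i = 1 then 1 else 0)) / n"
    using ne assms by (subst integral_pmf_of_set) (auto simp: K_def intro!: sum.cong split: if_splits)
  also have "\<dots> = (n * real (K u 1) + real (K u 1)) / n"
    using assms sum_count[of u 1] by (simp add: sum.distrib K_def)
  finally show ?thesis using assms by (simp add: field_simps)
qed

lemma exp_rec:
  assumes "n \<ge> 1" "0 \<le> p" "p \<le> 1"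
  shows "measure_pmf.expectation (simon_urn p (Suc n)) (\<lambda>u. real (K u 1))
       = measure_pmf.expectation (simon_urn p n) (\<lambda>u. real (K u 1)) * (1 + (1 - p) / n)"
proof -
  let ?A = "set_pmf (simon_urn p n)"
  let ?g = "(\<lambda>u. bernoulli_pmf p \<bind> (\<lambda>b. if b then return_pmf (u @ [Suc (card (set u))])
          else map_pmf (\<lambda>i. u @ [u ! i]) (pmf_of_set {..<length u})))"
  have eq: "simon_urn p (Suc n) = simon_urn p n \<bind> ?g" using assms by simp
  have fin: "finite (set_pmf (?g u))" if "u \<in> ?A" for u
  proof -
    have "{..<length u} \<noteq> {}" using simon_support[OF that] assms by (simp add: lessThan_empty_iff)
    then show ?thesis by (auto simp: set_pmf_of_set)
  qed
  have "measure_pmf.expectation (simon_urn p (Suc n)) (\<lambda>u. real (K u 1))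
     = (\<Sum>u\<in>?A. pmf (simon_urn p n) u *\<^sub>R measure_pmf.expectation (?g u) (\<lambda>u. real (K u 1)))"
    unfolding eq by (rule pmf_expectation_bind) (use simon_finite fin in auto)
  also have "\<dots> = (\<Sum>u\<in>?A. pmf (simon_urn p n) u *\<^sub>R (real (K u 1) * (1 + (1 - p) / n)))"
    by (intro sum.cong refl) (use inner_exp simon_support assms in auto)
  also have "\<dots> = (\<Sum>u\<in>?A. pmf (simon_urn p n) u *\<^sub>R real (K u 1)) * (1 + (1 - p) / n)"
    by (simp add: sum_distrib_right mult.assoc)
  also have "(\<Sum>u\<in>?A. pmf (simon_urn p n) u *\<^sub>R real (K u 1)) = measure_pmf.expectation (simon_urn p n) (\<lambda>u. real (K u 1))"
    by (rule integral_measure_pmf[symmetric]) (use simon_finite in auto)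
  finally show ?thesis .
qed


lemma Gamma_plus1_pos: "(z::real) > 0 \<Longrightarrow> Gamma (z + 1) = z * Gamma z"
  by (rule Gamma_plus1) (auto dest: nonpos_Ints_nonpos)

lemma Gamma_upper:
  assumes x: "(x::real) > 0" and s: "0 \<le> s" "s \<le> 1"
  shows "Gamma (x + s) \<le> Gamma x * x powr s"
proof -
  have "(ln \<circ> Gamma) ((1 - s) *\<^sub>R x + s *\<^sub>R (x + 1)) \<le> (1 - s) * (ln \<circ> Gamma) x + s * (ln \<circ> Gamma) (x + 1)"
    by (rule convex_onD[OF log_convex_Gamma_real]) (use x s in auto)
  moreover have "(1 - s) *\<^sub>R x + s *\<^sub>R (x + 1) = x + s" by (simp add: algebra_simps)
  moreover have "ln (Gamma (x + 1)) = ln x + ln (Gamma x)"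
    using x by (simp only: Gamma_plus1_pos[OF x]) (rule ln_mult_pos[OF x Gamma_real_pos[OF x]])
  ultimately have "ln (Gamma (x + s)) \<le> ln (Gamma x) + s * ln x"
    by (simp add: algebra_simps)
  moreover have "Gamma (x + s) = exp (ln (Gamma (x + s)))"
    using x s by (intro exp_ln[symmetric] Gamma_real_pos) auto
  ultimately have "Gamma (x + s) \<le> exp (ln (Gamma x) + s * ln x)"
    by (metis exp_le_cancel_iff)
  also have "\<dots> = Gamma x * x powr s"
    using x by (simp add: exp_add powr_def)
  finally show ?thesis .
qed

lemma Gamma_lower:
  assumes x: "(x::real) > 0" and s: "0 \<le> s" "s \<le> 1"
  shows "x * Gamma x \<le> Gamma (x + s) * (x + s) powr (1 - s)"
proof -
  have xs: "x + s > 0" using x s by auto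
  have "(ln \<circ> Gamma) ((1 - (1 - s)) *\<^sub>R (x + s) + (1 - s) *\<^sub>R (x + s + 1)) \<le> (1 - (1 - s)) * (ln \<circ> Gamma) (x + s) + (1 - s) * (ln \<circ> Gamma) (x + s + 1)"
    by (rule convex_onD[OF log_convex_Gamma_real]) (use x s in auto)
  moreover have "(1 - (1 - s)) *\<^sub>R (x + s) + (1 - s) *\<^sub>R (x + s + 1) = x + 1" by (simp add: algebra_simps)
  moreover have "ln (Gamma (x + 1)) = ln x + ln (Gamma x)"
    using x by (simp only: Gamma_plus1_pos[OF x]) (rule ln_mult_pos[OF x Gamma_real_pos[OF x]])
  moreover have "ln (Gamma (x + s + 1)) = ln (x + s) + ln (Gamma (x + s))"
    by (simp only: Gamma_plus1_pos[OF xs]) (rule ln_mult_pos[OF xs Gamma_real_pos[OF xs]])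
  ultimately have "ln x + ln (Gamma x) \<le> ln (Gamma (x + s)) + (1 - s) * ln (x + s)"
    by (simp add: algebra_simps)
  then have "exp (ln x + ln (Gamma x)) \<le> exp (ln (Gamma (x + s)) + (1 - s) * ln (x + s))"
    by simp
  then show ?thesis
    using x xs by (simp add: exp_add powr_def)
qed


lemma closed_form:
  assumes p: "0 < p" "p < 1"
  shows "measure_pmf.expectation (simon_urn p (Suc m)) (\<lambda>u. real (K u 1))
      = Gamma (real (Suc m) + 1 - p) / (Gamma (2 - p) * Gamma (real (Suc m)))"
proof (induction m)
  case 0
  have "Gamma (2 - p) > 0" using p by simp
  then show ?case by (simp add: K_def bind_return_pmf)
next
  case (Suc m)
  have z: "real (Suc m) + 1 - p > 0" using p by simp
  have g2: "Gamma (2 - p) > 0" using p by simp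
  have gm: "Gamma (real (Suc m)) > 0" by simp
  have e1: "Gamma (real (Suc (Suc m)) + 1 - p) = (real (Suc m) + 1 - p) * Gamma (real (Suc m) + 1 - p)"
    using Gamma_plus1_pos[OF z] by (simp add: algebra_simps)
  have e2: "Gamma (real (Suc (Suc m))) = real (Suc m) * Gamma (real (Suc m))"
    using Gamma_plus1_pos[of "real (Suc m)"] by (simp add: algebra_simps)
  have "measure_pmf.expectation (simon_urn p (Suc (Suc m))) (\<lambda>u. real (K u 1))
     = Gamma (real (Suc m) + 1 - p) / (Gamma (2 - p) * Gamma (real (Suc m))) * (1 + (1 - p) / real (Suc m))"
    using exp_rec[of "Suc m" p] p Suc by simp
  also have "\<dots> = Gamma (real (Suc (Suc m)) + 1 - p) / (Gamma (2 - p) * Gamma (real (Suc (Suc m))))"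
    unfolding e1 e2 using g2 gm by (simp add: field_simps)
  finally show ?case .
qed

theorem corollary4p1:
  fixes p :: real
  assumes "0 < p" and "p < 1"
  shows "(\<forall>n::nat. n \<ge> 1 \<longrightarrow>
            measure_pmf.expectation (simon_urn p n) (\<lambda>u. real (K u 1))
              = Gamma (real n + 1 - p) / (Gamma (2 - p) * Gamma (real n)))
      \<and> (\<lambda>n::nat. measure_pmf.expectation (simon_urn p n) (\<lambda>u. real (K u 1))
                   - real n powr (1 - p) / Gamma (2 - p))
          \<in> O(\<lambda>n. 1 / real n powr p)"
proof
  show cf: "\<forall>n::nat. n \<ge> 1 \<longrightarrow>
            measure_pmf.expectation (simon_urn p n) (\<lambda>u. real (K u 1))
              = Gamma (real n + 1 - p) / (Gamma (2 - p) * Gamma (real n))"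
  proof (intro allI impI)
    fix n :: nat assume "n \<ge> 1"
    then obtain m where "n = Suc m" by (cases n) auto
    then show "measure_pmf.expectation (simon_urn p n) (\<lambda>u. real (K u 1))
              = Gamma (real n + 1 - p) / (Gamma (2 - p) * Gamma (real n))"
      using closed_form[OF assms] by simp
  qed
  define s where "s = 1 - p"
  have s: "0 < s" "s < 1" using assms by (auto simp: s_def)
  define G2 where "G2 = Gamma (2 - p)"
  have G2: "G2 > 0" using assms by (simp add: G2_def)
  have bound: "\<bar>measure_pmf.expectation (simon_urn p n) (\<lambda>u. real (K u 1))
                   - real n powr (1 - p) / Gamma (2 - p)\<bar> \<le> (s / G2) * \<bar>1 / real n powr p\<bar>"
    if n: "n \<ge> 1" for n :: nat
  proof -
    define x where "x = real n"
    have x: "x \<ge> 1" using n by (simp add: x_def)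
    define a where "a = x powr p"
    have a: "a > 0" using x by (simp add: a_def)
    have E: "measure_pmf.expectation (simon_urn p n) (\<lambda>u. real (K u 1)) = Gamma (x + s) / Gamma x / G2"
      using cf n by (simp add: x_def s_def G2_def algebra_simps)
    have gx: "Gamma x > 0" using x by simp
    have xs: "x powr (1 - p) = x / a"
      using x by (simp add: a_def powr_diff)
    have up: "Gamma (x + s) \<le> Gamma x * (x / a)"
      using Gamma_upper[of x s] x s xs by (simp add: s_def)
    have lo0: "x * Gamma x \<le> Gamma (x + s) * (x + s) powr p"
      using Gamma_lower[of x s] x s by (simp add: s_def)
    have "(x + s) powr p = a * ((x + s) / x) powr p"
      using x s by (simp add: a_def powr_mult[symmetric])
    also have "((x + s) / x) powr p \<le> ((x + s) / x) powr 1"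
      using x s assms by (intro powr_mono) (auto simp: field_simps)
    finally have "(x + s) powr p \<le> a * ((x + s) / x)"
      using a x s by simp
    hence "x * Gamma x \<le> Gamma (x + s) * (a * ((x + s) / x))"
      using lo0 x s by (meson Gamma_real_pos add_pos_pos less_le_trans zero_less_one order_trans mult_left_mono less_imp_le)
    hence "x * (x * Gamma x) \<le> x * (Gamma (x + s) * (a * ((x + s) / x)))"
      using x by (intro mult_left_mono) auto
    also have "\<dots> = Gamma (x + s) * (a * (x + s))" using x by simp
    finally have lo1: "x * (x * Gamma x) \<le> Gamma (x + s) * (a * (x + s))" .
    have pos: "a * (x + s) > 0" using a x s by simp
    have lo: "x * x * Gamma x / (a * (x + s)) \<le> Gamma (x + s)"
      using lo1 by (subst pos_divide_le_eq[OF pos]) (simp add: algebra_simps)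
    have "Gamma (x + s) / Gamma x \<le> x / a" using up gx by (simp add: field_simps)
    moreover have "x * x / (a * (x + s)) \<le> Gamma (x + s) / Gamma x"
      using lo gx by (simp add: field_simps)
    moreover have "x / a - x * x / (a * (x + s)) = s * x / (a * (x + s))"
    proof -
      have xs0: "x + s \<noteq> 0" using x s by simp
      have "x / a = x * (x + s) / (a * (x + s))" using xs0 by simp
      then show ?thesis by (simp add: diff_divide_distrib[symmetric] algebra_simps)
    qed
    moreover have "s * x / (a * (x + s)) \<le> s / a"
    proof -
      have "x / (x + s) \<le> 1" using x s by simp
      hence "(s / a) * (x / (x + s)) \<le> (s / a) * 1"
        using s a by (intro mult_left_mono) auto
      thus ?thesis by simp
    qed
    ultimately have "\<bar>Gamma (x + s) / Gamma x - x / a\<bar> \<le> s / a" by linarith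
    hence "\<bar>Gamma (x + s) / Gamma x / G2 - x / a / G2\<bar> \<le> s / a / G2"
    proof -
      have "\<bar>Gamma (x + s) / Gamma x / G2 - x / a / G2\<bar> = \<bar>Gamma (x + s) / Gamma x - x / a\<bar> / G2"
        using G2 by (simp only: diff_divide_distrib[symmetric] abs_divide)
      also have "\<dots> \<le> s / a / G2"
        using G2 \<open>\<bar>Gamma (x + s) / Gamma x - x / a\<bar> \<le> s / a\<close> by (intro divide_right_mono) auto
      finally show ?thesis .
    qed
    thus ?thesis
      using E xs a G2 by (simp add: x_def a_def G2_def mult_ac)
  qed
  show "(\<lambda>n::nat. measure_pmf.expectation (simon_urn p n) (\<lambda>u. real (K u 1))
                   - real n powr (1 - p) / Gamma (2 - p))
          \<in> O(\<lambda>n. 1 / real n powr p)"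
    by (rule bigoI[where c = "s / G2"]) (use bound in \<open>auto simp: eventually_at_top_linorder intro!: exI[of _ 1]\<close>)
qed

end
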